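(* Let $G$ be a graph of order $p$ with at least one edge and independence number $\alpha$. Then $str(G)\ge 2p-2\alpha+1$.
   Context: For a graph $G$ of order $p$, a numbering is a bijection $f:V(G)\to[1,p]$; $str_f(G)=\max\{f(u)+f(v): uv\in E(G)\}$ and $str(G)=\min_f str_f(G)$. *)

theory Defs
  imports Main
begin

definition simple_graph :: "'a set \<Rightarrow> 'a set set \<Rightarrow> bool" where
  "simple_graph V E \<longleftrightarrow> finite V \<and> (\<forall>e\<in>E. e \<subseteq> V \<and> card e = 2)"

definition numberings :: "'a set \<Rightarrow> ('a \<Rightarrow> nat) set" where
  "numberings V = {f. bij_betw f V {1..card V}}"

definition str_f :: "'a set set \<Rightarrow> ('a \<Rightarrow> nat) \<Rightarrow> nat" where
  "str_f E f = Max {f u + f v | u v. {u, v} \<in> E}"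

definition strength :: "'a set \<Rightarrow> 'a set set \<Rightarrow> nat" where
  "strength V E = Min (str_f E ` numberings V)"

definition independent_set :: "'a set \<Rightarrow> 'a set set \<Rightarrow> 'a set \<Rightarrow> bool" where
  "independent_set V E S \<longleftrightarrow> S \<subseteq> V \<and> (\<forall>u\<in>S. \<forall>v\<in>S. {u, v} \<notin> E)"

definition independence_number :: "'a set \<Rightarrow> 'a set set \<Rightarrow> nat" where
  "independence_number V E = Max (card ` {S. independent_set V E S})"

end

theory Submission
  imports Defs
begin

theorem mainTheorem11:
  fixes V :: "'a set" and E :: "'a set set"
  assumes "simple_graph V E"
    and "E \<noteq> {}"
  shows "int (strength V E) \<ge> 2 * int (card V) - 2 * int (independence_number V E) + 1"
proof -
  define p where "p = card V"
  have finV: "finite V" and Esub: "\<And>e. e \<in> E \<Longrightarrow> e \<subseteq> V \<and> card e = 2"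
    using assms(1) unfolding simple_graph_def by auto
  have "\<exists>g. bij_betw g V {1..card V}"
    using finV by (intro finite_same_card_bij) auto
  then have ne: "numberings V \<noteq> {}" unfolding numberings_def by auto
  have bnd: "str_f E g \<le> 2 * p" if "g \<in> numberings V" for g
  proof -
    have bij: "bij_betw g V {1..p}" using that unfolding numberings_def p_def by auto
    have sub: "{g u + g v | u v. {u, v} \<in> E} \<subseteq> (\<lambda>(u,v). g u + g v) ` (V \<times> V)"
      using Esub by fastforce
    have fin: "finite {g u + g v | u v. {u, v} \<in> E}"
      using sub finV by (meson finite_SigmaI finite_imageI finite_subset)
    have "Max {g u + g v | u v. {u, v} \<in> E} \<le> 2 * p"
    proof (cases "{g u + g v | u v. {u, v} \<in> E} = {}")
      case True
      obtain e where e: "e \<in> E" using assms(2) by auto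
      then obtain u v where "e = {u, v}" using Esub[OF e] by (metis card_2_iff)
      then have False using True e by blast
      then show ?thesis by simp
    next
      case False
      show ?thesis
      proof (subst Max_le_iff[OF fin False], clarify)
        fix u v assume "{u, v} \<in> E"
        then have "u \<in> V" "v \<in> V" using Esub by auto
        then have "g u \<le> p" "g v \<le> p" using bij by (auto dest: bij_betw_apply)
        then show "g u + g v \<le> 2 * p" by simp
      qed
    qed
    then show ?thesis unfolding str_f_def .
  qed
  have finI: "finite (str_f E ` numberings V)"
    by (rule finite_subset[of _ "{..2*p}"]) (use bnd in auto)
  have "strength V E \<in> str_f E ` numberings V"
    unfolding strength_def using finI ne by (intro Min_in) auto
  then obtain f where fn: "f \<in> numberings V" and sdef: "strength V E = str_f E f" by auto
  define s where "s = str_f E f"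
  have bij: "bij_betw f V {1..p}" using fn unfolding numberings_def p_def by auto
  have sub: "{f u + f v | u v. {u, v} \<in> E} \<subseteq> (\<lambda>(u,v). f u + f v) ` (V \<times> V)"
    using Esub by fastforce
  have fin: "finite {f u + f v | u v. {u, v} \<in> E}"
    using sub finV by (meson finite_SigmaI finite_imageI finite_subset)
  have edge: "f u + f v \<le> s" if "{u, v} \<in> E" for u v
    unfolding s_def str_f_def by (rule Max_ge[OF fin]) (use that in blast)
  obtain e where e: "e \<in> E" using assms(2) by auto
  then obtain u v where uv: "e = {u, v}" using Esub[OF e] by (metis card_2_iff)
  then have "u \<in> V" using Esub[OF e] by auto
  then have "f u \<ge> 1" using bij by (auto dest: bij_betw_apply)
  then have s1: "s \<ge> 1" using edge[of u v] e uv by simp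
  define t where "t = s - s div 2"
  have t1: "t \<ge> 1" using s1 unfolding t_def by simp
  define S where "S = {x \<in> V. f x \<ge> t}"
  have indep: "independent_set V E S"
    unfolding independent_set_def
  proof (intro conjI ballI)
    show "S \<subseteq> V" unfolding S_def by auto
  next
    fix x y assume x: "x \<in> S" and y: "y \<in> S"
    show "{x, y} \<notin> E"
    proof
      assume xy: "{x, y} \<in> E"
      show False
      proof (cases "x = y")
        case True then show False using Esub[OF xy] by simp
      next
        case False
        have "f x \<noteq> f y" using False x y bij unfolding S_def bij_betw_def inj_on_def by auto
        moreover have "f x \<ge> t" "f y \<ge> t" using x y unfolding S_def by auto
        ultimately have "f x + f y \<ge> 2 * t + 1" by linarith
        moreover have "2 * t + 1 > s" unfolding t_def by linarith
        ultimately show False using edge[OF xy] by linarith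
      qed
    qed
  qed
  have img: "f ` S = {t..p}"
  proof
    show "f ` S \<subseteq> {t..p}" using bij unfolding S_def by (auto dest: bij_betw_apply)
    show "{t..p} \<subseteq> f ` S"
    proof
      fix k assume k: "k \<in> {t..p}"
      then have "k \<in> {1..p}" using t1 by auto
      then obtain x where "x \<in> V" "f x = k" using bij unfolding bij_betw_def by (metis imageE)
      then show "k \<in> f ` S" using k unfolding S_def by auto
    qed
  qed
  have "inj_on f S" using bij unfolding bij_betw_def S_def by (auto intro: inj_on_subset)
  then have cS: "card S = p + 1 - t" using img card_image by fastforce
  have finC: "finite (card ` {S. independent_set V E S})"
    by (rule finite_subset[of _ "{..card V}"])
       (auto simp: independent_set_def intro: card_mono finV)
  have "card S \<le> independence_number V E"
    unfolding independence_number_def by (rule Max_ge[OF finC]) (use indep in blast)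
  then have "p + 1 - t \<le> independence_number V E" using cS by simp
  then show ?thesis using sdef unfolding s_def[symmetric] p_def[symmetric] t_def by linarith
qed

end
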